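(* Let $n\ge d\ge 1$ and let $(A,C)$ be a real OTSON pair ($A$ is $n\times n$, $C$ is $d\times n$). Let $\{\tilde Q(\theta):\theta\in\Theta\}$ be an orthogonal reduction parameterization of $O(d+1)$ to $e_1$, and for $\theta\in\Theta$ and $1\le k\le n$ let $Q^{(k)}(\theta)$ be its embedding defined below. Then there exist $\theta_1,\dots,\theta_n\in\Theta$ such that $$\begin{pmatrix} C\\ A\end{pmatrix}=Q^{(n)}(\theta_n)Q^{(n-1)}(\theta_{n-1})\cdots Q^{(2)}(\theta_2)Q^{(1)}(\theta_1)\begin{pmatrix}\mathbb{I}_n\\ 0_{d,n}\end{pmatrix}.$$
   Context: ${}^*$ denotes transpose; $e_k$ is the $k$-th unit vector; $0_{a,b}$ is the $a\times b$ zero matrix. $(A,C)$ is OTSON if $A^*A=\mathbb{I}_n-C^*C$ and the $(n+d)\times n$ stack $Q=\begin{pmatrix} C\\ A\end{pmatrix}$ satisfies $Q_{i,j}=0$ for $j>i$. An orthogonal reduction parameterization (ORP) of $O(m)$ to $e_k$ is a family $\{\tilde Q(\theta):\theta\in\Theta\}$, $\Theta\subset\mathbb{R}^{m-1}$, of real orthogonal $m\times m$ matrices such that for every nonzero $h\in\mathbb{R}^m$ there is a unique $\theta(h)\in\Theta$ with $\tilde Q(\theta)^*h=\|h\|e_k$. For an ORP of $O(d+1)$ to $e_1$ write $\tilde Q(\theta)=\begin{pmatrix}\mu&y^*\\ x&\tilde O\end{pmatrix}$ with $\mu\in\mathbb{R}$, $x,y\in\mathbb{R}^d$, $\tilde O\in\mathbb{R}^{d\times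 d}$ (all depending on $\theta$). The embedding is the $(n+d)\times(n+d)$ matrix $$Q^{(k)}(\theta)=\mathbb{I}_{k-1}\oplus\begin{pmatrix}\mu&0_{1,n-k}&y^*\\ 0_{n-k,1}&\mathbb{I}_{n-k}&0_{n-k,d}\\ x&0_{d,n-k}&\tilde O\end{pmatrix}.$$ *)

theory Defs
  imports "Jordan_Normal_Form.Matrix"
begin

text \<open>Real matrices of varying sizes are JNF matrices (type real mat) with explicit
  carrier (dimension) constraints. Indices are 0-based; the paper's index k (1-based)
  corresponds to row/column k-1.\<close>

definition OTSON :: "nat \<Rightarrow> nat \<Rightarrow> real mat \<Rightarrow> real mat \<Rightarrow> bool" where
  "OTSON n d A C \<longleftrightarrow>
     A \<in> carrier_mat n n \<and> C \<in> carrier_mat d n \<and>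
     transpose_mat A * A = 1\<^sub>m n - transpose_mat C * C \<and>
     (\<forall>i < n + d. \<forall>j < n. j > i \<longrightarrow> (C @\<^sub>r A) $$ (i, j) = 0)"

definition orthogonal_mat :: "nat \<Rightarrow> real mat \<Rightarrow> bool" where
  "orthogonal_mat m Q \<longleftrightarrow> Q \<in> carrier_mat m m \<and>
     transpose_mat Q * Q = 1\<^sub>m m \<and> Q * transpose_mat Q = 1\<^sub>m m"

definition vnorm :: "real vec \<Rightarrow> real" where
  "vnorm h = sqrt (h \<bullet> h)"

definition ORP :: "nat \<Rightarrow> nat \<Rightarrow> real vec set \<Rightarrow> (real vec \<Rightarrow> real mat) \<Rightarrow> bool" where
  "ORP m k \<Theta> Qt \<longleftrightarrow>
     \<Theta> \<subseteq> carrier_vec (m - 1) \<and>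
     (\<forall>\<theta>\<in>\<Theta>. orthogonal_mat m (Qt \<theta>)) \<and>
     (\<forall>h \<in> carrier_vec m. h \<noteq> 0\<^sub>v m \<longrightarrow>
        (\<exists>!\<theta>. \<theta> \<in> \<Theta> \<and> transpose_mat (Qt \<theta>) *\<^sub>v h = vnorm h \<cdot>\<^sub>v unit_vec m (k - 1)))"

text \<open>The central block
  [[mu, 0, y^T], [0, I_(n-k), 0], [x, 0, O~]] of size (n-k+1+d), where
  Qt = [[mu, y^T], [x, O~]] is (d+1) x (d+1).\<close>
definition emb_block :: "nat \<Rightarrow> nat \<Rightarrow> nat \<Rightarrow> real mat \<Rightarrow> real mat" where
  "emb_block n d k Qt =
     (let r = n - k + 1 + d;
          idx = (\<lambda>a. if a = 0 then Some 0 else if a > n - k then Some (a - (n - k)) else None)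
      in mat r r (\<lambda>(a, b). case (idx a, idx b) of
            (Some p, Some q) \<Rightarrow> Qt $$ (p, q)
          | _ \<Rightarrow> (if a = b then 1 else 0)))"

definition embedding :: "nat \<Rightarrow> nat \<Rightarrow> nat \<Rightarrow> real mat \<Rightarrow> real mat" where
  "embedding n d k Qt =
     (let r = n - k + 1 + d in
      four_block_mat (1\<^sub>m (k - 1)) (0\<^sub>m (k - 1) r) (0\<^sub>m r (k - 1)) (emb_block n d k Qt))"

fun emb_prod :: "nat \<Rightarrow> nat \<Rightarrow> (real vec \<Rightarrow> real mat) \<Rightarrow> (nat \<Rightarrow> real vec) \<Rightarrow> nat \<Rightarrow> real mat" where
  "emb_prod n d Qt \<theta> 0 = 1\<^sub>m (n + d)"
| "emb_prod n d Qt \<theta> (Suc j) = embedding n d (Suc j) (Qt (\<theta> (Suc j))) * emb_prod n d Qt \<theta> j"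

end

theory Submission
  imports Defs
begin

definition SS :: "nat \<Rightarrow> nat \<Rightarrow> nat \<Rightarrow> nat set" where "SS n d c = insert c {n..<n+d}"
definition sig :: "nat \<Rightarrow> nat \<Rightarrow> nat \<Rightarrow> nat" where "sig n c p = (if p = 0 then c else n + p - 1)"
definition piS :: "nat \<Rightarrow> nat \<Rightarrow> nat \<Rightarrow> nat" where "piS n c i = (if i = c then 0 else i + 1 - n)"

lemma emb_carrier: assumes "c < n"
  shows "embedding n d (Suc c) Qt \<in> carrier_mat (n+d) (n+d)"
  using assms unfolding embedding_def emb_block_def Let_def carrier_mat_def by auto

lemma emb_entry: assumes "c < n" "i < n+d" "j < n+d"
  shows "embedding n d (Suc c) Qt $$ (i,j) = (if i \<in> SS n d c \<and> j \<in> SS n d c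
     then Qt $$ (piS n c i, piS n c j) else if i = j then 1 else 0)"
proof -
  let ?r = "n - Suc c + 1 + d"
  have r: "?r = n + d - c" using assms by auto
  have e: "embedding n d (Suc c) Qt $$ (i,j) = (if i < c then if j < c then (if i = j then 1 else 0) else 0
     else if j < c then 0 else emb_block n d (Suc c) Qt $$ (i - c, j - c))"
    unfolding embedding_def Let_def
    using assms by (subst index_mat_four_block, auto simp: emb_block_def Let_def)
  show ?thesis
  proof (cases "i < c \<or> j < c")
    case True
    then show ?thesis unfolding e SS_def using assms by auto
  next
    case False
    then have ic: "i \<ge> c" "j \<ge> c" by auto
    have "emb_block n d (Suc c) Qt $$ (i - c, j - c) = (case ((if i - c = 0 then Some 0 else if i - c > n - Suc c then Some (i - c - (n - Suc c)) else None),
       (if j - c = 0 then Some 0 else if j - c > n - Suc c then Some (j - c - (n - Suc c)) else None)) of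
            (Some p, Some q) \<Rightarrow> Qt $$ (p, q)
          | _ \<Rightarrow> (if i - c = j - c then 1 else 0))"
      unfolding emb_block_def Let_def using assms ic by (subst index_mat, auto)
    moreover have "(if i - c = 0 then Some 0 else if i - c > n - Suc c then Some (i - c - (n - Suc c)) else None)
       = (if i \<in> SS n d c then Some (piS n c i) else None)"
      using assms ic unfolding SS_def piS_def by auto
    moreover have "(if j - c = 0 then Some 0 else if j - c > n - Suc c then Some (j - c - (n - Suc c)) else None)
       = (if j \<in> SS n d c then Some (piS n c j) else None)"
      using assms ic unfolding SS_def piS_def by auto
    moreover have "(i - c = j - c) = (i = j)" using ic by auto
    ultimately show ?thesis unfolding e using False by auto
  qed
qed


lemma sig_in: "c < n \<Longrightarrow> p < d+1 \<Longrightarrow> sig n c p \<in> SS n d c"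
  unfolding sig_def SS_def by auto
lemma pi_sig: "c < n \<Longrightarrow> p < d+1 \<Longrightarrow> piS n c (sig n c p) = p"
  unfolding sig_def piS_def by auto
lemma sig_pi: "c < n \<Longrightarrow> i \<in> SS n d c \<Longrightarrow> sig n c (piS n c i) = i"
  unfolding sig_def piS_def SS_def by auto
lemma pi_lt: "c < n \<Longrightarrow> i \<in> SS n d c \<Longrightarrow> piS n c i < d+1"
  unfolding piS_def SS_def by auto
lemma SS_lt: "c < n \<Longrightarrow> i \<in> SS n d c \<Longrightarrow> i < n + d"
  unfolding SS_def by auto
lemma pi_inj: "c < n \<Longrightarrow> i \<in> SS n d c \<Longrightarrow> j \<in> SS n d c \<Longrightarrow> piS n c i = piS n c j \<longleftrightarrow> i = j"
  by (metis sig_pi)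
lemma pi_zero: "c < n \<Longrightarrow> i \<in> SS n d c \<Longrightarrow> piS n c i = 0 \<longleftrightarrow> i = c"
  unfolding piS_def SS_def by auto

lemma sum_SS: assumes "c < n" "\<And>l. l < n+d \<Longrightarrow> l \<notin> SS n d c \<Longrightarrow> f l = 0"
  shows "(\<Sum>l<n+d. f l) = (\<Sum>p<d+1. f (sig n c p))"
proof -
  have "(\<Sum>l<n+d. f l) = (\<Sum>l\<in>SS n d c. f l)"
    by (rule sum.mono_neutral_right, insert assms SS_lt, auto)
  also have "SS n d c = sig n c ` {..<d+1}"
  proof
    show "SS n d c \<subseteq> sig n c ` {..<d+1}"
      using assms(1) sig_pi pi_lt by (metis image_eqI lessThan_iff subsetI)
  qed (use assms(1) sig_in in auto)
  also have "(\<Sum>l\<in>sig n c ` {..<d+1}. f l) = (\<Sum>p<d+1. f (sig n c p))"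
    by (rule sum.reindex_cong[OF _ refl refl], rule inj_onI, metis assms(1) lessThan_iff pi_sig)
  finally show ?thesis .
qed

lemma col_sum: assumes c: "c < n" and i: "i < n+d"
  shows "(\<Sum>l<n+d. embedding n d (Suc c) Qt $$ (l,i) * g l) =
    (if i \<in> SS n d c then (\<Sum>q<d+1. Qt $$ (q, piS n c i) * g (sig n c q)) else g i)"
proof (cases "i \<in> SS n d c")
  case True
  have "(\<Sum>l<n+d. embedding n d (Suc c) Qt $$ (l,i) * g l) =
     (\<Sum>q<d+1. embedding n d (Suc c) Qt $$ (sig n c q,i) * g (sig n c q))"
    by (rule sum_SS[OF c], insert True c i, auto simp: emb_entry)
  also have "\<dots> = (\<Sum>q<d+1. Qt $$ (q, piS n c i) * g (sig n c q))"
    by (rule sum.cong[OF refl], insert True c i, auto simp: emb_entry sig_in SS_lt pi_sig)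
  finally show ?thesis using True by simp
next
  case False
  have "(\<Sum>l<n+d. embedding n d (Suc c) Qt $$ (l,i) * g l) = (\<Sum>l<n+d. (if l = i then g l else 0))"
    by (rule sum.cong[OF refl], insert False c i, auto simp: emb_entry)
  also have "\<dots> = g i" using i by simp
  finally show ?thesis using False by simp
qed

lemma row_sum: assumes c: "c < n" and i: "i < n+d"
  shows "(\<Sum>l<n+d. embedding n d (Suc c) Qt $$ (i,l) * g l) =
    (if i \<in> SS n d c then (\<Sum>q<d+1. Qt $$ (piS n c i, q) * g (sig n c q)) else g i)"
proof (cases "i \<in> SS n d c")
  case True
  have "(\<Sum>l<n+d. embedding n d (Suc c) Qt $$ (i,l) * g l) =
     (\<Sum>q<d+1. embedding n d (Suc c) Qt $$ (i,sig n c q) * g (sig n c q))"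
    by (rule sum_SS[OF c], insert True c i, auto simp: emb_entry)
  also have "\<dots> = (\<Sum>q<d+1. Qt $$ (piS n c i, q) * g (sig n c q))"
    by (rule sum.cong[OF refl], insert True c i, auto simp: emb_entry sig_in SS_lt pi_sig)
  finally show ?thesis using True by simp
next
  case False
  have "(\<Sum>l<n+d. embedding n d (Suc c) Qt $$ (i,l) * g l) = (\<Sum>l<n+d. (if i = l then g l else 0))"
    by (rule sum.cong[OF refl], insert False c i, auto simp: emb_entry)
  also have "\<dots> = g i" using i by simp
  finally show ?thesis using False by simp
qed


lemma mult_entry: "A \<in> carrier_mat a k \<Longrightarrow> B \<in> carrier_mat k b \<Longrightarrow> i < a \<Longrightarrow> j < b \<Longrightarrow>
  (A * B) $$ (i,j) = (\<Sum>l<k. A $$ (i,l) * B $$ (l,j))"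
  by (simp add: scalar_prod_def atLeast0LessThan)

lemma emb_orth: assumes c: "c < n" and Q: "Q \<in> carrier_mat (d+1) (d+1)" and QQ: "Q * transpose_mat Q = 1\<^sub>m (d+1)"
  shows "embedding n d (Suc c) Q * transpose_mat (embedding n d (Suc c) Q) = 1\<^sub>m (n+d)"
proof -
  let ?E = "embedding n d (Suc c) Q"
  have E: "?E \<in> carrier_mat (n+d) (n+d)" using emb_carrier[OF c] .
  show ?thesis
  proof (rule eq_matI)
    fix i j assume i: "i < dim_row (1\<^sub>m (n+d))" and j: "j < dim_col (1\<^sub>m (n+d))"
    then have i: "i < n+d" and j: "j < n+d" by auto
    have "(?E * transpose_mat ?E) $$ (i,j) = (\<Sum>l<n+d. ?E $$ (i,l) * ?E $$ (j,l))"
      by (subst mult_entry[OF E], insert E i j, auto)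
    also have "\<dots> = (if i \<in> SS n d c then (\<Sum>q<d+1. Q $$ (piS n c i, q) * ?E $$ (j, sig n c q)) else ?E $$ (j,i))"
      by (rule row_sum[OF c i])
    also have "\<dots> = (if i = j then 1 else 0)"
    proof (cases "i \<in> SS n d c")
      case True
      show ?thesis
      proof (cases "j \<in> SS n d c")
        case Tj: True
        have "(\<Sum>q<d+1. Q $$ (piS n c i, q) * ?E $$ (j, sig n c q)) = (\<Sum>q<d+1. Q $$ (piS n c i, q) * transpose_mat Q $$ (q, piS n c j))"
          by (rule sum.cong[OF refl], insert Tj c j Q pi_lt[OF c Tj], auto simp: emb_entry sig_in SS_lt pi_sig)
        also have "\<dots> = (Q * transpose_mat Q) $$ (piS n c i, piS n c j)"
          by (subst mult_entry[OF Q], insert Q pi_lt[OF c True] pi_lt[OF c Tj], auto)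
        also have "\<dots> = (if i = j then 1 else 0)" unfolding QQ
          using pi_lt[OF c True] pi_lt[OF c Tj] pi_inj[OF c True Tj] by auto
        finally show ?thesis using True by simp
      next
        case Fj: False
        have "(\<Sum>q<d+1. Q $$ (piS n c i, q) * ?E $$ (j, sig n c q)) = 0"
          by (rule sum.neutral, insert Fj c j, auto simp: emb_entry sig_in SS_lt)
        then show ?thesis using True Fj by auto
      qed
    next
      case False
      then show ?thesis using c i j by (auto simp: emb_entry)
    qed
    finally show "(?E * transpose_mat ?E) $$ (i,j) = 1\<^sub>m (n+d) $$ (i,j)" using i j by simp
  qed (insert E, auto)
qed

lemma emb_prod_carrier: "j \<le> n \<Longrightarrow> emb_prod n d Qt \<theta> j \<in> carrier_mat (n+d) (n+d)"
proof (induction j)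
  case (Suc j)
  then show ?case by (auto intro!: mult_carrier_mat[OF emb_carrier])
qed auto

lemma emb_prod_cong: "(\<And>k. 1 \<le> k \<Longrightarrow> k \<le> j \<Longrightarrow> \<theta> k = \<theta>' k) \<Longrightarrow> emb_prod n d Qt \<theta> j = emb_prod n d Qt \<theta>' j"
proof (induction j)
  case (Suc j)
  have "emb_prod n d Qt \<theta> j = emb_prod n d Qt \<theta>' j" using Suc by auto
  moreover have "\<theta> (Suc j) = \<theta>' (Suc j)" using Suc.prems by auto
  ultimately show ?case by simp
qed auto


lemma main_lemma:
  assumes orp: "ORP (d + 1) 1 \<Theta> Qt"
  shows "m \<le> n \<Longrightarrow> P \<in> carrier_mat (n+d) n \<Longrightarrow> transpose_mat P * P = 1\<^sub>m n \<Longrightarrow>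
    (\<forall>i<n+d. \<forall>j<n. i < j \<longrightarrow> P $$ (i,j) = 0) \<Longrightarrow>
    (\<forall>i<n+d. \<forall>j<n. m \<le> j \<longrightarrow> P $$ (i,j) = (if i = j then 1 else 0)) \<Longrightarrow>
    \<exists>\<theta>. (\<forall>k\<in>{1..m}. \<theta> k \<in> \<Theta>) \<and> P = emb_prod n d Qt \<theta> m * (1\<^sub>m n @\<^sub>r 0\<^sub>m d n)"
proof (induction m arbitrary: P)
  case 0
  have "P = 1\<^sub>m n @\<^sub>r 0\<^sub>m d n"
    by (rule eq_matI, insert 0, auto simp: append_rows_def)
  moreover have "1\<^sub>m (n+d) * (1\<^sub>m n @\<^sub>r 0\<^sub>m d n :: real mat) = (1\<^sub>m n @\<^sub>r 0\<^sub>m d n)"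
    by (rule left_mult_one_mat[of _ _ n], auto)
  ultimately show ?case by auto
next
  case (Suc m)
  note P = Suc.prems(2) and PP = Suc.prems(3) and tri = Suc.prems(4) and fx = Suc.prems(5)
  have mn: "m < n" using Suc.prems(1) by auto
  have PPe: "(\<Sum>l<n+d. P $$ (l,a) * P $$ (l,b)) = (if a = b then 1 else 0)" if "a < n" "b < n" for a b
  proof -
    have "(transpose_mat P * P) $$ (a,b) = (\<Sum>l<n+d. P $$ (l,a) * P $$ (l,b))"
      by (subst mult_entry[of _ n "n+d"], insert P that, auto)
    then show ?thesis using PP that by simp
  qed
  have supp: "P $$ (l,m) = 0" if l: "l < n+d" "l \<notin> SS n d m" for l
  proof (cases "l < m")
    case True then show ?thesis using tri l mn by auto
  next
    case False
    then have lm: "m < l" "l < n" using l unfolding SS_def by auto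
    have "(\<Sum>l'<n+d. P $$ (l',l) * P $$ (l',m)) = (\<Sum>l'<n+d. (if l' = l then P $$ (l',m) else 0))"
      by (rule sum.cong[OF refl], insert fx lm, auto)
    also have "\<dots> = P $$ (l,m)" using l by simp
    finally show ?thesis using PPe[of l m] lm mn by simp
  qed
  define h where "h = vec (d+1) (\<lambda>p. P $$ (sig n m p, m))"
  have hc: "h \<in> carrier_vec (d+1)" unfolding h_def by simp
  have "h \<bullet> h = (\<Sum>p<d+1. P $$ (sig n m p, m) * P $$ (sig n m p, m))"
    unfolding h_def scalar_prod_def by (simp add: atLeast0LessThan)
  also have "\<dots> = (\<Sum>l<n+d. P $$ (l,m) * P $$ (l,m))"
    by (rule sum_SS[symmetric, OF mn], insert supp, auto)
  also have "\<dots> = 1" using PPe[of m m] mn by simp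
  finally have hh: "h \<bullet> h = 1" .
  then have hn: "vnorm h = 1" unfolding vnorm_def by simp
  have h0: "h \<noteq> 0\<^sub>v (d+1)" using hh by auto
  from orp have Thc: "\<forall>\<theta>\<in>\<Theta>. orthogonal_mat (d+1) (Qt \<theta>)"
    and ex: "\<forall>h \<in> carrier_vec (d+1). h \<noteq> 0\<^sub>v (d+1) \<longrightarrow>
        (\<exists>!\<theta>. \<theta> \<in> \<Theta> \<and> transpose_mat (Qt \<theta>) *\<^sub>v h = vnorm h \<cdot>\<^sub>v unit_vec (d+1) (1 - 1))"
    unfolding ORP_def by auto
  have "\<exists>!\<theta>. \<theta> \<in> \<Theta> \<and> transpose_mat (Qt \<theta>) *\<^sub>v h = vnorm h \<cdot>\<^sub>v unit_vec (d+1) (1 - 1)"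
    using ex hc h0 by blast
  then obtain \<theta>0 where th0: "\<theta>0 \<in> \<Theta>" and th0h': "transpose_mat (Qt \<theta>0) *\<^sub>v h = vnorm h \<cdot>\<^sub>v unit_vec (d+1) (1 - 1)"
    by blast
  have th0h: "transpose_mat (Qt \<theta>0) *\<^sub>v h = 1 \<cdot>\<^sub>v unit_vec (d+1) 0" using th0h' hn by simp
  define Q0 where "Q0 = Qt \<theta>0"
  have Q0: "Q0 \<in> carrier_mat (d+1) (d+1)" "Q0 * transpose_mat Q0 = 1\<^sub>m (d+1)"
    using Thc th0 unfolding Q0_def orthogonal_mat_def by auto
  define E where "E = embedding n d (Suc m) Q0"
  have E: "E \<in> carrier_mat (n+d) (n+d)" unfolding E_def using emb_carrier[OF mn] .
  have EE: "E * transpose_mat E = 1\<^sub>m (n+d)" unfolding E_def by (rule emb_orth[OF mn Q0])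
  define P' where "P' = transpose_mat E * P"
  have P': "P' \<in> carrier_mat (n+d) n" unfolding P'_def using E P by auto
  have P'e: "P' $$ (i,j) = (if i \<in> SS n d m then (\<Sum>q<d+1. Q0 $$ (q, piS n m i) * P $$ (sig n m q, j)) else P $$ (i,j))"
    if i: "i < n+d" and j: "j < n" for i j
  proof -
    have "P' $$ (i,j) = (\<Sum>l<n+d. E $$ (l,i) * P $$ (l,j))"
      unfolding P'_def by (subst mult_entry[of _ "n+d" "n+d"], insert E P i j, auto)
    then show ?thesis unfolding E_def using col_sum[OF mn i] by simp
  qed
  have F1: "P' $$ (i,j) = (if i = j then 1 else 0)" if i: "i < n+d" and j: "j < n" "Suc m \<le> j" for i j
  proof (cases "i \<in> SS n d m")
    case True
    have jn: "j \<notin> SS n d m" using j unfolding SS_def by auto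
    have "(\<Sum>q<d+1. Q0 $$ (q, piS n m i) * P $$ (sig n m q, j)) = 0"
      by (rule sum.neutral, insert fx j jn sig_in[OF mn] SS_lt[OF mn], fastforce)
    moreover have "i \<noteq> j" using True jn by auto
    ultimately show ?thesis using P'e[OF i j(1)] True by simp
  next
    case False
    then show ?thesis using P'e[OF i j(1)] fx i j by auto
  qed
  have F2: "P' $$ (i,m) = (if i = m then 1 else 0)" if i: "i < n+d" for i
  proof (cases "i \<in> SS n d m")
    case True
    have pl: "piS n m i < d+1" using pi_lt[OF mn True] .
    have "(\<Sum>q<d+1. Q0 $$ (q, piS n m i) * P $$ (sig n m q, m)) = (transpose_mat Q0 *\<^sub>v h) $ piS n m i"
      using Q0(1) pl unfolding h_def by (simp add: scalar_prod_def atLeast0LessThan)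
    also have "\<dots> = (if i = m then 1 else 0)" using th0h pl pi_zero[OF mn True] unfolding Q0_def by simp
    finally show ?thesis using P'e[OF i mn] True by simp
  next
    case False
    then have "i \<noteq> m" unfolding SS_def by auto
    then show ?thesis using P'e[OF i mn] False supp[OF i False] by simp
  qed
  have tri': "\<forall>i<n+d. \<forall>j<n. i < j \<longrightarrow> P' $$ (i,j) = 0"
  proof (intro allI impI)
    fix i j assume i: "i < n+d" and j: "j < n" and ij: "i < j"
    show "P' $$ (i,j) = 0"
    proof (cases "i \<in> SS n d m")
      case True
      then have "i = m" using ij j unfolding SS_def by auto
      then show ?thesis using F1[OF i j] ij by auto
    next
      case False
      then show ?thesis using P'e[OF i j] tri i j ij by auto
    qed
  qed
  have fx': "\<forall>i<n+d. \<forall>j<n. m \<le> j \<longrightarrow> P' $$ (i,j) = (if i = j then 1 else 0)"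
  proof (intro allI impI)
    fix i j assume i: "i < n+d" and j: "j < n" and mj: "m \<le> j"
    show "P' $$ (i,j) = (if i = j then 1 else 0)"
    proof (cases "j = m")
      case True then show ?thesis using F2[OF i] by simp
    next
      case False then show ?thesis using F1[OF i j] mj by simp
    qed
  qed
  have PP': "transpose_mat P' * P' = 1\<^sub>m n"
  proof -
    have "transpose_mat P' = transpose_mat P * E" unfolding P'_def
      using E P by (simp add: transpose_mult)
    then have 1: "transpose_mat P' * P' = transpose_mat P * E * (transpose_mat E * P)"
      unfolding P'_def by simp
    have 2: "transpose_mat P * E * (transpose_mat E * P) = transpose_mat P * (E * (transpose_mat E * P))"
      by (rule assoc_mult_mat[of _ n "n+d" _ "n+d" _ n], insert E P, auto)
    have 3: "E * (transpose_mat E * P) = (E * transpose_mat E) * P"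
      by (rule assoc_mult_mat[symmetric, of _ "n+d" "n+d" _ "n+d" _ n], insert E P, auto)
    have 4: "(E * transpose_mat E) * P = P" using EE P by simp
    show ?thesis using 1 2 3 4 PP by simp
  qed
  obtain \<theta>' where th': "\<forall>k\<in>{1..m}. \<theta>' k \<in> \<Theta>" and P'eq: "P' = emb_prod n d Qt \<theta>' m * (1\<^sub>m n @\<^sub>r 0\<^sub>m d n)"
    using Suc.IH[OF _ P' PP' tri' fx'] mn by auto
  define \<theta> where "\<theta> = \<theta>'(Suc m := \<theta>0)"
  have cong: "emb_prod n d Qt \<theta> m = emb_prod n d Qt \<theta>' m"
    by (rule emb_prod_cong, auto simp: \<theta>_def)
  have M: "emb_prod n d Qt \<theta>' m \<in> carrier_mat (n+d) (n+d)" using emb_prod_carrier mn by auto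
  have I0: "(1\<^sub>m n @\<^sub>r 0\<^sub>m d n :: real mat) \<in> carrier_mat (n+d) n" by auto
  have "P = (E * transpose_mat E) * P" using EE P by simp
  also have "\<dots> = E * P'" unfolding P'_def using E P by (simp add: assoc_mult_mat[of _ "n+d" "n+d" _ "n+d"])
  also have "\<dots> = (E * emb_prod n d Qt \<theta>' m) * (1\<^sub>m n @\<^sub>r 0\<^sub>m d n)"
    unfolding P'eq by (rule assoc_mult_mat[symmetric, of _ "n+d" "n+d" _ "n+d" _ n], insert E M I0, auto)
  also have "\<dots> = emb_prod n d Qt \<theta> (Suc m) * (1\<^sub>m n @\<^sub>r 0\<^sub>m d n)"
    using cong unfolding E_def Q0_def \<theta>_def by simp
  finally have "P = emb_prod n d Qt \<theta> (Suc m) * (1\<^sub>m n @\<^sub>r 0\<^sub>m d n)" .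
  moreover have "\<forall>k\<in>{1..Suc m}. \<theta> k \<in> \<Theta>" using th' th0 unfolding \<theta>_def by auto
  ultimately show ?case by blast
qed


theorem theorem6p1:
  fixes n d :: nat and A C :: "real mat"
    and \<Theta> :: "real vec set" and Qt :: "real vec \<Rightarrow> real mat"
  assumes "1 \<le> d" and "d \<le> n"
    and "OTSON n d A C"
    and "ORP (d + 1) 1 \<Theta> Qt"
  shows "\<exists>\<theta> :: nat \<Rightarrow> real vec. (\<forall>k \<in> {1..n}. \<theta> k \<in> \<Theta>) \<and>
           C @\<^sub>r A = emb_prod n d Qt \<theta> n * (1\<^sub>m n @\<^sub>r 0\<^sub>m d n)"
proof -
  have A: "A \<in> carrier_mat n n" and C: "C \<in> carrier_mat d n"
    and AA: "transpose_mat A * A = 1\<^sub>m n - transpose_mat C * C"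
    and tri: "\<forall>i < n + d. \<forall>j < n. j > i \<longrightarrow> (C @\<^sub>r A) $$ (i, j) = 0"
    using assms(3) unfolding OTSON_def by auto
  have Qc': "C @\<^sub>r A \<in> carrier_mat (d+n) n" using A C by auto
  then have Qc: "C @\<^sub>r A \<in> carrier_mat (n+d) n" by (simp add: add.commute)
  have Qe: "(C @\<^sub>r A) $$ (l,j) = (if l < d then C $$ (l,j) else A $$ (l - d, j))" if "l < d+n" "j < n" for l j
    using that A C unfolding append_rows_def by simp
  have QQ: "transpose_mat (C @\<^sub>r A) * (C @\<^sub>r A) = 1\<^sub>m n"
  proof (rule eq_matI)
    fix i j assume "i < dim_row (1\<^sub>m n)" "j < dim_col (1\<^sub>m n)"
    then have i: "i < n" and j: "j < n" by auto
    let ?f = "\<lambda>l. (C @\<^sub>r A) $$ (l,i) * (C @\<^sub>r A) $$ (l,j)"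
    have "(transpose_mat (C @\<^sub>r A) * (C @\<^sub>r A)) $$ (i,j) = (\<Sum>l<d+n. ?f l)"
      by (subst mult_entry[of _ n "d+n"], insert Qc' i j, auto)
    also have "\<dots> = sum ?f {0..<d} + sum ?f {d..<d+n}"
      by (simp add: atLeast0LessThan[symmetric] sum.atLeastLessThan_concat)
    also have "sum ?f {0..<d} = (\<Sum>l<d. C $$ (l,i) * C $$ (l,j))"
      by (simp add: atLeast0LessThan, rule sum.cong, insert Qe i j, auto)
    also have "sum ?f {d..<d+n} = sum (\<lambda>l. ?f (l + d)) {0..<n}"
      using sum.shift_bounds_nat_ivl[of ?f 0 d n] by (simp add: add.commute)
    also have "\<dots> = (\<Sum>l<n. A $$ (l,i) * A $$ (l,j))"
      by (simp add: atLeast0LessThan, rule sum.cong, insert Qe i j, auto)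
    also have "(\<Sum>l<d. C $$ (l,i) * C $$ (l,j)) = (transpose_mat C * C) $$ (i,j)"
      by (subst mult_entry[of _ n d], insert C i j, auto)
    also have "(\<Sum>l<n. A $$ (l,i) * A $$ (l,j)) = (transpose_mat A * A) $$ (i,j)"
      by (subst mult_entry[of _ n n], insert A i j, auto)
    also have "\<dots> = 1\<^sub>m n $$ (i,j) - (transpose_mat C * C) $$ (i,j)"
      unfolding AA using C i j by simp
    finally show "(transpose_mat (C @\<^sub>r A) * (C @\<^sub>r A)) $$ (i,j) = 1\<^sub>m n $$ (i,j)" by simp
  qed (insert Qc, auto)
  show ?thesis
    by (rule main_lemma[OF assms(4) order.refl Qc QQ], insert tri, auto)
qed

end
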